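(* Let $G$ be a group, $n\ge1$, $\phi_1,\dots,\phi_n\in\operatorname{End}(G)$ and $\sigma\in S_n$. Let $\phi$ be the endomorphism of $G^n$ given by $\phi(g_1,\dots,g_n)=(\phi_1(g_{\sigma(1)}),\dots,\phi_n(g_{\sigma(n)}))$. Write the disjoint cycle decomposition of $\sigma$, including cycles of length one, as $\sigma=(c_1\,\dots\,c_{n_1})(c_{n_1+1}\,\dots\,c_{n_2})\cdots(c_{n_{k-1}+1}\,\dots\,c_{n_k})$ with $0=n_0<n_1<\dots<n_k=n$, where the cycle $(a_1\,a_2\,\dots\,a_m)$ means $a_1\mapsto a_2\mapsto\cdots\mapsto a_m\mapsto a_1$. Put $\tilde\phi_j=\phi_{c_{n_{j-1}+1}}\circ\phi_{c_{n_{j-1}+2}}\circ\cdots\circ\phi_{c_{n_j}}$. Then $R(\phi)=\prod_{j=1}^kR(\tilde\phi_j)$.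
   Context: For an endomorphism $\psi$ of a group $A$, $x,y\in A$ are $\psi$-conjugate if $x=gy\psi(g)^{-1}$ for some $g\in A$; $R(\psi)\in\mathbb{N}\cup\{\infty\}$ is the number of $\psi$-conjugacy classes, with the convention $a\cdot\infty=\infty$. *)

theory Defs
  imports "HOL-Algebra.Algebra" "HOL-Library.Extended_Nat" "HOL-Combinatorics.Permutations"
begin

definition twisted_conj :: "('a, 'b) monoid_scheme \<Rightarrow> ('a \<Rightarrow> 'a) \<Rightarrow> ('a \<times> 'a) set" where
  "twisted_conj G \<psi> = {(x, y). x \<in> carrier G \<and> y \<in> carrier G \<and>
      (\<exists>g\<in>carrier G. x = g \<otimes>\<^bsub>G\<^esub> y \<otimes>\<^bsub>G\<^esub> inv\<^bsub>G\<^esub> (\<psi> g))}"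

definition reidemeister :: "('a, 'b) monoid_scheme \<Rightarrow> ('a \<Rightarrow> 'a) \<Rightarrow> enat" where
  "reidemeister G \<psi> =
     (if finite (carrier G // twisted_conj G \<psi>) then enat (card (carrier G // twisted_conj G \<psi>))
      else \<infinity>)"

definition twisted_perm_endo :: "nat \<Rightarrow> (nat \<Rightarrow> 'a \<Rightarrow> 'a) \<Rightarrow> (nat \<Rightarrow> nat) \<Rightarrow> (nat \<Rightarrow> 'a) \<Rightarrow> (nat \<Rightarrow> 'a)" where
  "twisted_perm_endo n \<phi> \<sigma> g = (\<lambda>i\<in>{0..<n}. \<phi> i (g (\<sigma> i)))"

definition block_comp :: "(nat \<Rightarrow> 'a \<Rightarrow> 'a) \<Rightarrow> (nat \<Rightarrow> nat) \<Rightarrow> nat \<Rightarrow> nat \<Rightarrow> 'a \<Rightarrow> 'a" where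
  "block_comp \<phi> c a b = foldr (\<circ>) (map (\<lambda>p. \<phi> (c p)) [a..<b]) id"

end

theory Submission
  imports Defs
begin


fun prodr :: "('a,'b) monoid_scheme \<Rightarrow> (nat \<Rightarrow> 'a) \<Rightarrow> nat \<Rightarrow> nat \<Rightarrow> 'a" where
  "prodr G f a 0 = \<one>\<^bsub>G\<^esub>"
| "prodr G f a (Suc b) = (if a \<le> b then prodr G f a b \<otimes>\<^bsub>G\<^esub> f b else \<one>\<^bsub>G\<^esub>)"

lemma prodr_empty: "prodr G f a a = \<one>\<^bsub>G\<^esub>"
  by (cases a) auto

lemma foldr_comp_id: "foldr (\<circ>) xs f = foldr (\<circ>) xs id \<circ> f"
  by (induction xs) auto

lemma block_comp_empty: "block_comp \<phi> c a a = id"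
  by (simp add: block_comp_def)

lemma block_comp_Suc: "a \<le> p \<Longrightarrow> block_comp \<phi> c a (Suc p) = block_comp \<phi> c a p \<circ> \<phi> (c p)"
  unfolding block_comp_def
  by (simp add: foldr_append) (subst foldr_comp_id, simp)

lemma hom_id': "id \<in> hom G G"
  unfolding hom_def by auto

lemma hom_id'': "(\<lambda>x. x) \<in> hom G G"
  unfolding hom_def by auto

lemma hom_comp': "f \<in> hom G G \<Longrightarrow> g \<in> hom G G \<Longrightarrow> f \<circ> g \<in> hom G G"
  unfolding hom_def by (auto simp: Pi_def)

lemma block_comp_hom:
  assumes "\<And>q. a \<le> q \<Longrightarrow> q < b \<Longrightarrow> \<phi> (c q) \<in> hom G G"
  shows "block_comp \<phi> c a b \<in> hom G G"
  using assms
proof (induction b)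
  case 0 then show ?case by (simp add: block_comp_def hom_id' hom_id'')
next
  case (Suc b)
  show ?case
  proof (cases "a \<le> b")
    case True
    show ?thesis unfolding block_comp_Suc[OF True] by (rule hom_comp') (use Suc True in auto)
  next
    case False
    then have "a = Suc b \<or> a > Suc b" by auto
    then show ?thesis by (auto simp: block_comp_def hom_def)
  qed
qed

context group begin

lemma hom_inv': "h \<in> hom G G \<Longrightarrow> x \<in> carrier G \<Longrightarrow> h (inv x) = inv (h x)"
  by (rule group_hom.hom_inv) (auto simp: group_hom_def group_hom_axioms_def is_group)

lemma hom_closed': "h \<in> hom G G \<Longrightarrow> x \<in> carrier G \<Longrightarrow> h x \<in> carrier G"
  by (auto simp: hom_def)

lemma prodr_closed: "(\<And>q. a \<le> q \<Longrightarrow> q < b \<Longrightarrow> f q \<in> carrier G) \<Longrightarrow> prodr G f a b \<in> carrier G"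
  by (induction b) auto

lemma telescope:
  assumes "a \<le> b"
  and x: "\<And>q. a \<le> q \<Longrightarrow> q < b \<Longrightarrow> x q \<in> carrier G"
  and y: "\<And>q. a \<le> q \<Longrightarrow> q < b \<Longrightarrow> y q \<in> carrier G"
  and w: "\<And>q. a \<le> q \<Longrightarrow> q \<le> b \<Longrightarrow> w q \<in> carrier G"
  and Ph: "\<And>q. a \<le> q \<Longrightarrow> q \<le> b \<Longrightarrow> \<Psi> q \<in> hom G G"
  and ph: "\<And>q. a \<le> q \<Longrightarrow> q < b \<Longrightarrow> f q \<in> hom G G"
  and Pstep: "\<And>q. a \<le> q \<Longrightarrow> q < b \<Longrightarrow> \<Psi> (Suc q) = \<Psi> q \<circ> f q"
  and eq: "\<And>q. a \<le> q \<Longrightarrow> q < b \<Longrightarrow> x q = w q \<otimes> y q \<otimes> inv (f q (w (Suc q)))"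
  shows "prodr G (\<lambda>q. \<Psi> q (x q)) a b = \<Psi> a (w a) \<otimes> prodr G (\<lambda>q. \<Psi> q (y q)) a b \<otimes> inv (\<Psi> b (w b))"
  using assms
proof (induction b)
  case 0
  then have wa: "\<Psi> a (w a) \<in> carrier G" using hom_closed' by auto
  from 0 show ?case using wa by (simp add: r_inv)
next
  case (Suc b)
  show ?case
  proof (cases "a \<le> b")
    case False
    then have ab: "a = Suc b" using Suc by auto
    have wa: "\<Psi> a (w a) \<in> carrier G" using Suc ab hom_closed' by auto
    show ?thesis using wa ab by (simp add: prodr_empty r_inv)
  next
    case True
    have IH: "prodr G (\<lambda>q. \<Psi> q (x q)) a b = \<Psi> a (w a) \<otimes> prodr G (\<lambda>q. \<Psi> q (y q)) a b \<otimes> inv (\<Psi> b (w b))"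
      using Suc True by auto
    have Pb: "\<Psi> b \<in> hom G G" using Suc True by auto
    have fb: "f b \<in> hom G G" using Suc True by auto
    have wb: "w b \<in> carrier G" and wb1: "w (Suc b) \<in> carrier G" using Suc True by auto
    have xb: "x b \<in> carrier G" and yb: "y b \<in> carrier G" using Suc True by auto
    have fw: "f b (w (Suc b)) \<in> carrier G" using fb wb1 hom_closed' by auto
    have xeq: "\<Psi> b (x b) = \<Psi> b (w b) \<otimes> \<Psi> b (y b) \<otimes> inv (\<Psi> (Suc b) (w (Suc b)))"
      using Suc(9)[of b] True Pstep Suc(8)[of b]
      by (simp add: hom_mult[OF Pb] wb yb fw hom_inv'[OF Pb] m_closed)
    define A where "A = \<Psi> a (w a)"
    define Y where "Y = prodr G (\<lambda>q. \<Psi> q (y q)) a b"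
    define B where "B = \<Psi> b (w b)"
    define C where "C = \<Psi> b (y b)"
    define D where "D = \<Psi> (Suc b) (w (Suc b))"
    have A: "A \<in> carrier G" unfolding A_def using Suc True hom_closed' by auto
    have Y: "Y \<in> carrier G" unfolding Y_def using Suc True
      by (intro prodr_closed hom_closed'[of "\<Psi> _"]) auto
    have B: "B \<in> carrier G" unfolding B_def using Pb wb hom_closed' by auto
    have C: "C \<in> carrier G" unfolding C_def using Pb yb hom_closed' by auto
    have D: "D \<in> carrier G" unfolding D_def using Suc True hom_closed' by auto
    have "prodr G (\<lambda>q. \<Psi> q (x q)) a (Suc b) = (A \<otimes> Y \<otimes> inv B) \<otimes> (B \<otimes> C \<otimes> inv D)"
      using True IH xeq by (simp add: A_def Y_def B_def C_def D_def)
    also have "\<dots> = A \<otimes> (Y \<otimes> C) \<otimes> inv D"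
    proof -
      have "inv B \<otimes> (B \<otimes> (C \<otimes> inv D)) = C \<otimes> inv D"
        using B C D by (metis l_inv m_assoc inv_closed m_closed l_one)
      then show ?thesis using A Y B C D by (simp add: m_assoc)
    qed
    also have "\<dots> = \<Psi> a (w a) \<otimes> prodr G (\<lambda>q. \<Psi> q (y q)) a (Suc b) \<otimes> inv (\<Psi> (Suc b) (w (Suc b)))"
      using True by (simp add: A_def Y_def C_def D_def)
    finally show ?thesis .
  qed
qed

end



lemma enat_prod_nz: "finite J \<Longrightarrow> (\<And>j. j \<in> J \<Longrightarrow> f j \<noteq> (0::enat)) \<Longrightarrow> prod f J \<noteq> 0"
  by (induction J rule: finite_induct) auto

lemma enat_prod_inf:
  assumes "finite J" "j0 \<in> J" "f j0 = (\<infinity>::enat)" "\<And>j. j \<in> J \<Longrightarrow> f j \<noteq> 0"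
  shows "prod f J = \<infinity>"
proof -
  have "prod f J = f j0 * prod f (J - {j0})" using assms by (simp add: prod.remove)
  moreover have "prod f (J - {j0}) \<noteq> 0" using assms by (intro enat_prod_nz) auto
  ultimately show ?thesis using assms by (simp add: imult_is_infinity)
qed

lemma quotient_count:
  assumes R: "R \<subseteq> A \<times> A"
    and Fmap: "\<And>x. x \<in> A \<Longrightarrow> F x \<in> PiE J B"
    and Fsurj: "PiE J B \<subseteq> F ` A"
    and iff: "\<And>x y. x \<in> A \<Longrightarrow> y \<in> A \<Longrightarrow> (x, y) \<in> R \<longleftrightarrow> (\<forall>j\<in>J. (F x j, F y j) \<in> S j)"
    and eqv: "\<And>j. j \<in> J \<Longrightarrow> equiv (B j) (S j)"
    and fin: "finite J"
    and ne: "\<And>j. j \<in> J \<Longrightarrow> B j \<noteq> {}"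
  shows "(if finite (A // R) then enat (card (A // R)) else \<infinity>) =
    (\<Prod>j\<in>J. if finite (B j // S j) then enat (card (B j // S j)) else \<infinity>)"
proof -
  define h where "h x = (\<lambda>j\<in>J. S j `` {F x j})" for x
  have hiff: "(x, y) \<in> R \<longleftrightarrow> h x = h y" if "x \<in> A" "y \<in> A" for x y
  proof -
    have "h x = h y \<longleftrightarrow> (\<forall>j\<in>J. S j `` {F x j} = S j `` {F y j})"
      unfolding h_def fun_eq_iff restrict_def by (auto split: if_splits)
    also have "\<dots> \<longleftrightarrow> (\<forall>j\<in>J. (F x j, F y j) \<in> S j)"
    proof (intro ball_cong[OF refl])
      fix j assume j: "j \<in> J"
      show "(S j `` {F x j} = S j `` {F y j}) = ((F x j, F y j) \<in> S j)"
        by (rule eq_equiv_class_iff[OF eqv[OF j]]) (use Fmap that j in \<open>auto simp: PiE_iff\<close>)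
    qed
    finally show ?thesis using iff that by simp
  qed
  define fib where "fib v = {y \<in> A. h y = v}" for v
  have AR: "A // R = fib ` (h ` A)"
  proof -
    have "R `` {x} = fib (h x)" if "x \<in> A" for x
      using R hiff that unfolding fib_def by auto
    then show ?thesis unfolding quotient_def by auto
  qed
  have inj: "inj_on fib (h ` A)"
    unfolding inj_on_def fib_def by blast
  have hA: "h ` A = PiE J (\<lambda>j. B j // S j)"
  proof
    show "h ` A \<subseteq> PiE J (\<lambda>j. B j // S j)"
      using Fmap unfolding h_def by (auto simp: PiE_iff intro!: quotientI)
  next
    show "PiE J (\<lambda>j. B j // S j) \<subseteq> h ` A"
    proof
      fix Q assume Q: "Q \<in> PiE J (\<lambda>j. B j // S j)"
      define z where "z = (\<lambda>j\<in>J. SOME b. b \<in> B j \<and> Q j = S j `` {b})"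
      have zj: "z j \<in> B j \<and> Q j = S j `` {z j}" if "j \<in> J" for j
      proof -
        have "\<exists>b. b \<in> B j \<and> Q j = S j `` {b}" using Q that by (auto simp: PiE_iff quotient_def)
        then have "(SOME b. b \<in> B j \<and> Q j = S j `` {b}) \<in> B j \<and> Q j = S j `` {SOME b. b \<in> B j \<and> Q j = S j `` {b}}"
          by (rule someI_ex)
        moreover have "z j = (SOME b. b \<in> B j \<and> Q j = S j `` {b})" using that by (simp add: z_def)
        ultimately show ?thesis by simp
      qed
      have "z \<in> PiE J B" using zj unfolding z_def by (auto simp: PiE_iff)
      then obtain x where x: "x \<in> A" "F x = z" using Fsurj by auto
      have "h x = Q"
      proof
        fix j show "h x j = Q j"
          using zj[of j] x Q unfolding h_def by (auto simp: PiE_iff extensional_def)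
      qed
      then show "Q \<in> h ` A" using x by auto
    qed
  qed
  have cardeq: "card (A // R) = card (PiE J (\<lambda>j. B j // S j))"
    and fineq: "finite (A // R) \<longleftrightarrow> finite (PiE J (\<lambda>j. B j // S j))"
    using card_image[OF inj] finite_image_iff[OF inj] unfolding AR hA by simp_all
  have qne: "B j // S j \<noteq> {}" if "j \<in> J" for j using ne[OF that] by (auto simp: quotient_def)
  show ?thesis
  proof (cases "\<forall>j\<in>J. finite (B j // S j)")
    case True
    then have "finite (PiE J (\<lambda>j. B j // S j))" using fin by (intro finite_PiE) auto
    then have "(if finite (A // R) then enat (card (A // R)) else \<infinity>) = enat (\<Prod>j\<in>J. card (B j // S j))"
      using fineq cardeq card_PiE[OF fin] by simp
    also have "\<dots> = (\<Prod>j\<in>J. enat (card (B j // S j)))"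
      by (simp only: of_nat_eq_enat[symmetric] of_nat_prod)
    also have "\<dots> = (\<Prod>j\<in>J. if finite (B j // S j) then enat (card (B j // S j)) else \<infinity>)"
      using True by (intro prod.cong) auto
    finally show ?thesis .
  next
    case False
    then obtain j0 where j0: "j0 \<in> J" "infinite (B j0 // S j0)" by auto
    have "(\<lambda>f. f j0) ` PiE J (\<lambda>j. B j // S j) = B j0 // S j0"
    proof
      show "(\<lambda>f. f j0) ` PiE J (\<lambda>j. B j // S j) \<subseteq> B j0 // S j0" using j0 by auto
    next
      show "B j0 // S j0 \<subseteq> (\<lambda>f. f j0) ` PiE J (\<lambda>j. B j // S j)"
      proof
        fix q assume q: "q \<in> B j0 // S j0"
        define f where "f = (\<lambda>j\<in>J. if j = j0 then q else (SOME r. r \<in> B j // S j))"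
        have "f \<in> PiE J (\<lambda>j. B j // S j)"
          unfolding f_def using q qne by (auto simp: PiE_iff some_in_eq)
        moreover have "f j0 = q" using j0 unfolding f_def by simp
        ultimately show "q \<in> (\<lambda>f. f j0) ` PiE J (\<lambda>j. B j // S j)" by force
      qed
    qed
    then have "infinite (PiE J (\<lambda>j. B j // S j))" using j0 finite_imageI[of "PiE J (\<lambda>j. B j // S j)" "\<lambda>f. f j0"] by auto
    then have "(if finite (A // R) then enat (card (A // R)) else \<infinity>) = \<infinity>" using fineq by simp
    also have "\<dots> = (\<Prod>j\<in>J. if finite (B j // S j) then enat (card (B j // S j)) else \<infinity>)"
    proof (rule sym, rule enat_prod_inf[OF fin j0(1)])
      show "(if finite (B j0 // S j0) then enat (card (B j0 // S j0)) else \<infinity>) = \<infinity>" using j0 by simp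
      fix j assume "j \<in> J"
      then show "(if finite (B j // S j) then enat (card (B j // S j)) else \<infinity>) \<noteq> 0"
        using qne by (auto simp: zero_enat_def)
    qed
    finally show ?thesis .
  qed
qed




context group begin

lemma cancel1 [simp]: "x \<in> carrier G \<Longrightarrow> y \<in> carrier G \<Longrightarrow> inv x \<otimes> (x \<otimes> y) = y"
  by (metis inv_closed l_inv l_one m_assoc)

lemma cancel2 [simp]: "x \<in> carrier G \<Longrightarrow> y \<in> carrier G \<Longrightarrow> x \<otimes> (inv x \<otimes> y) = y"
  by (metis inv_closed r_inv l_one m_assoc)

lemma hom_one': "h \<in> hom G G \<Longrightarrow> h \<one> = \<one>"
  by (rule group_hom.hom_one) (auto simp: group_hom_def group_hom_axioms_def is_group)

lemma twisted_equiv: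
  assumes h: "\<psi> \<in> hom G G"
  shows "equiv (carrier G) (twisted_conj G \<psi>)"
proof (rule equivI)
  show "twisted_conj G \<psi> \<subseteq> carrier G \<times> carrier G" by (auto simp: twisted_conj_def)
next
  show "refl_on (carrier G) (twisted_conj G \<psi>)"
  proof (rule refl_onI)
    fix x assume x: "x \<in> carrier G"
    then show "(x, x) \<in> twisted_conj G \<psi>"
      unfolding twisted_conj_def using hom_one'[OF h] by (auto intro!: bexI[of _ \<one>])
  qed
next
  show "sym (twisted_conj G \<psi>)"
  proof (rule symI)
    fix x y assume "(x, y) \<in> twisted_conj G \<psi>"
    then obtain g where g: "g \<in> carrier G" and x: "x \<in> carrier G" and y: "y \<in> carrier G"
      and e: "x = g \<otimes> y \<otimes> inv (\<psi> g)" by (auto simp: twisted_conj_def)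
    have pg: "\<psi> g \<in> carrier G" using h g hom_closed' by auto
    have "y = inv g \<otimes> x \<otimes> inv (\<psi> (inv g))"
      using g y pg by (simp add: e hom_inv'[OF h] m_assoc)
    then show "(y, x) \<in> twisted_conj G \<psi>" using g x y unfolding twisted_conj_def
      by (auto intro!: bexI[of _ "inv g"])
  qed
next
  show "trans (twisted_conj G \<psi>)"
  proof (rule transI)
    fix x y z assume "(x, y) \<in> twisted_conj G \<psi>" "(y, z) \<in> twisted_conj G \<psi>"
    then obtain g g' where g: "g \<in> carrier G" and g': "g' \<in> carrier G" and x: "x \<in> carrier G" and y: "y \<in> carrier G"
      and z: "z \<in> carrier G"
      and e: "x = g \<otimes> y \<otimes> inv (\<psi> g)" and e': "y = g' \<otimes> z \<otimes> inv (\<psi> g')" by (auto simp: twisted_conj_def)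
    have pg: "\<psi> g \<in> carrier G" "\<psi> g' \<in> carrier G" using h g g' hom_closed' by auto
    have "x = (g \<otimes> g') \<otimes> z \<otimes> inv (\<psi> (g \<otimes> g'))"
      using g g' z pg by (simp add: e e' hom_mult[OF h] inv_mult_group m_assoc)
    then show "(x, z) \<in> twisted_conj G \<psi>" using g g' x z unfolding twisted_conj_def
      by (auto intro!: bexI[of _ "g \<otimes> g'"])
  qed
qed

end

fun bw :: "('a,'b) monoid_scheme \<Rightarrow> (nat \<Rightarrow> 'a \<Rightarrow> 'a) \<Rightarrow> (nat \<Rightarrow> nat) \<Rightarrow> (nat \<Rightarrow> 'a) \<Rightarrow> (nat \<Rightarrow> 'a) \<Rightarrow> nat \<Rightarrow> 'a \<Rightarrow> nat \<Rightarrow> 'a" where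
  "bw G \<phi> c x y t h 0 = h"
| "bw G \<phi> c x y t h (Suc d) = x (c (t - Suc d)) \<otimes>\<^bsub>G\<^esub> \<phi> (c (t - Suc d)) (bw G \<phi> c x y t h d) \<otimes>\<^bsub>G\<^esub> inv\<^bsub>G\<^esub> (y (c (t - Suc d)))"

locale twsetting = group G for G :: "('a, 'b) monoid_scheme" (structure) +
  fixes n k :: nat
    and \<phi> :: "nat \<Rightarrow> 'a \<Rightarrow> 'a"
    and \<sigma> c m :: "nat \<Rightarrow> nat"
  assumes n: "n \<ge> 1"
    and endo: "\<And>i. i < n \<Longrightarrow> \<phi> i \<in> hom G G"
    and perm: "\<sigma> permutes {0..<n}"
    and c_bij: "bij_betw c {0..<n} {0..<n}"
    and m0: "m 0 = 0"
    and m_mono: "\<And>j. j < k \<Longrightarrow> m j < m (Suc j)"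
    and mk: "m k = n"
    and cycles: "\<And>j p. j \<in> {1..k} \<Longrightarrow> m (j - 1) \<le> p \<Longrightarrow> p < m j \<Longrightarrow>
                   \<sigma> (c p) = (if Suc p < m j then c (Suc p) else c (m (j - 1)))"
begin

lemma m_le: "j \<le> j' \<Longrightarrow> j' \<le> k \<Longrightarrow> m j \<le> m j'"
proof (induction j')
  case 0 then show ?case by simp
next
  case (Suc j')
  then show ?case using m_mono[of j'] by (cases "j = Suc j'") auto
qed

lemma m_less: "j < j' \<Longrightarrow> j' \<le> k \<Longrightarrow> m j < m j'"
  using m_le[of "Suc j" j'] m_mono[of j] by auto

lemma blk_ex: "p < n \<Longrightarrow> \<exists>j\<in>{1..k}. m (j - 1) \<le> p \<and> p < m j"
proof -
  assume p: "p < n"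
  define j where "j = (LEAST j. p < m j)"
  have pj: "p < m j" unfolding j_def using p mk by (metis LeastI)
  have jk: "j \<le> k" unfolding j_def using p mk by (metis Least_le)
  have j0: "j \<noteq> 0" using pj m0 by (cases j) auto
  have "\<not> p < m (j - 1)" unfolding j_def using j0 not_less_Least[of "j - 1" "\<lambda>j. p < m j"] j_def by auto
  then show ?thesis using pj jk j0 by (intro bexI[of _ j]) auto
qed

lemma blk_uniq: "j \<in> {1..k} \<Longrightarrow> j' \<in> {1..k} \<Longrightarrow> m (j - 1) \<le> p \<Longrightarrow> p < m j \<Longrightarrow>
   m (j' - 1) \<le> p \<Longrightarrow> p < m j' \<Longrightarrow> j = j'"
proof (rule ccontr)
  assume a: "j \<in> {1..k}" "j' \<in> {1..k}" "m (j - 1) \<le> p" "p < m j" "m (j' - 1) \<le> p" "p < m j'" "j \<noteq> j'"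
  show False
  proof (cases "j < j'")
    case True
    then have "m j \<le> m (j' - 1)" using a by (intro m_le) auto
    then show False using a by auto
  next
    case False
    then have "m j' \<le> m (j - 1)" using a by (intro m_le) auto
    then show False using a by auto
  qed
qed

definition blk :: "nat \<Rightarrow> nat" where
  "blk p = (THE j. j \<in> {1..k} \<and> m (j - 1) \<le> p \<and> p < m j)"

lemma blk_eq: "j \<in> {1..k} \<Longrightarrow> m (j - 1) \<le> p \<Longrightarrow> p < m j \<Longrightarrow> blk p = j"
  unfolding blk_def by (rule the_equality) (auto intro: blk_uniq)

lemma blk_prop: "p < n \<Longrightarrow> blk p \<in> {1..k} \<and> m (blk p - 1) \<le> p \<and> p < m (blk p)"
  using blk_ex[of p] blk_eq by auto

lemma block_le_n: "j \<in> {1..k} \<Longrightarrow> m (j - 1) < m j \<and> m j \<le> n"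
  using m_less[of "j - 1" j] m_le[of j k] mk by auto

end



context twsetting begin

definition GP where "GP = product_group {0..<n} (\<lambda>_. G)"
definition Phi where "Phi = twisted_perm_endo n \<phi> \<sigma>"
definition psi where "psi j = block_comp \<phi> c (m (j - 1)) (m j)"
definition Psi where "Psi j p = block_comp \<phi> c (m (j - 1)) p"
definition F where "F x = (\<lambda>j\<in>{1..k}. prodr G (\<lambda>q. Psi j q (x (c q))) (m (j - 1)) (m j))"
definition pos where "pos i = inv_into {0..<n} c i"

lemma c_lt: "p < n \<Longrightarrow> c p < n"
  using c_bij bij_betwE by fastforce

lemma pos_c: "p < n \<Longrightarrow> pos (c p) = p"
  unfolding pos_def using c_bij by (simp add: bij_betw_def inv_into_f_f)

lemma c_pos: "i < n \<Longrightarrow> c (pos i) = i"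
  unfolding pos_def using c_bij by (simp add: bij_betw_def f_inv_into_f)

lemma pos_lt: "i < n \<Longrightarrow> pos i < n"
  unfolding pos_def using c_bij
  by (metis atLeastLessThan_iff bij_betw_def inv_into_into zero_le)

lemma sigma_lt: "i < n \<Longrightarrow> \<sigma> i < n"
  using permutes_in_image[OF perm] by auto

lemma phic_hom: "q < n \<Longrightarrow> \<phi> (c q) \<in> hom G G"
  using endo c_lt by auto

lemma Psi_hom: "p \<le> n \<Longrightarrow> Psi j p \<in> hom G G"
  unfolding Psi_def by (rule block_comp_hom) (auto intro: phic_hom)

lemma psi_hom: "j \<in> {1..k} \<Longrightarrow> psi j \<in> hom G G"
  using Psi_hom[of "m j" j] block_le_n[of j] unfolding Psi_def psi_def by auto

lemma Psi_start: "Psi j (m (j - 1)) = id"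
  unfolding Psi_def by (rule block_comp_empty)

lemma Psi_Suc: "m (j - 1) \<le> q \<Longrightarrow> Psi j (Suc q) = Psi j q \<circ> \<phi> (c q)"
  unfolding Psi_def by (rule block_comp_Suc)

lemma Psi_end: "Psi j (m j) = psi j"
  unfolding Psi_def psi_def ..

lemma GP_group: "group GP"
  unfolding GP_def by (rule product_group) (rule is_group)

lemma carrier_GP: "carrier GP = PiE {0..<n} (\<lambda>_. carrier G)"
  unfolding GP_def by simp

lemma inGP: "x \<in> carrier GP \<Longrightarrow> i < n \<Longrightarrow> x i \<in> carrier G"
  unfolding carrier_GP by auto

lemma Phi_closed: "g \<in> carrier GP \<Longrightarrow> Phi g \<in> carrier GP"
  unfolding carrier_GP Phi_def twisted_perm_endo_def
  using endo sigma_lt hom_closed' by (auto simp: PiE_iff)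

lemma tc_iff: "(x, y) \<in> twisted_conj GP Phi \<longleftrightarrow> x \<in> carrier GP \<and> y \<in> carrier GP \<and>
   (\<exists>g\<in>carrier GP. \<forall>i<n. x i = g i \<otimes> y i \<otimes> inv (\<phi> i (g (\<sigma> i))))"
proof -
  have key: "x = g \<otimes>\<^bsub>GP\<^esub> y \<otimes>\<^bsub>GP\<^esub> inv\<^bsub>GP\<^esub> (Phi g) \<longleftrightarrow> (\<forall>i<n. x i = g i \<otimes> y i \<otimes> inv (\<phi> i (g (\<sigma> i))))"
    if x: "x \<in> carrier GP" and g: "g \<in> carrier GP" for g
  proof -
    have ie: "inv\<^bsub>GP\<^esub> (Phi g) = (\<lambda>i\<in>{0..<n}. inv (Phi g i))"
      unfolding GP_def
      by (rule inv_product_group) (use Phi_closed[OF g] is_group in \<open>auto simp: carrier_GP\<close>)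
    have mm: "g \<otimes>\<^bsub>GP\<^esub> y \<otimes>\<^bsub>GP\<^esub> inv\<^bsub>GP\<^esub> (Phi g) = (\<lambda>i\<in>{0..<n}. (\<lambda>i\<in>{0..<n}. g i \<otimes> y i) i \<otimes> (inv\<^bsub>GP\<^esub> (Phi g)) i)"
      by (simp only: GP_def mult_product_group)
    have "g \<otimes>\<^bsub>GP\<^esub> y \<otimes>\<^bsub>GP\<^esub> inv\<^bsub>GP\<^esub> (Phi g) = (\<lambda>i\<in>{0..<n}. g i \<otimes> y i \<otimes> inv (\<phi> i (g (\<sigma> i))))"
      unfolding mm unfolding ie by (auto simp: Phi_def twisted_perm_endo_def restrict_def fun_eq_iff)
    moreover have "x \<in> extensional {0..<n}" using x by (simp add: carrier_GP PiE_iff)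
    ultimately show ?thesis
      by (auto simp: extensional_def fun_eq_iff)
  qed
  show ?thesis
    unfolding twisted_conj_def using key by auto
qed

lemma fwd:
  assumes x: "x \<in> carrier GP" and y: "y \<in> carrier GP" and g: "g \<in> carrier GP"
    and eqs: "\<forall>i<n. x i = g i \<otimes> y i \<otimes> inv (\<phi> i (g (\<sigma> i)))" and j: "j \<in> {1..k}"
  shows "prodr G (\<lambda>q. Psi j q (x (c q))) (m (j - 1)) (m j) =
    g (c (m (j - 1))) \<otimes> prodr G (\<lambda>q. Psi j q (y (c q))) (m (j - 1)) (m j) \<otimes> inv (psi j (g (c (m (j - 1)))))"
proof -
  define a where "a = m (j - 1)"
  define b where "b = m j"
  have ab: "a < b" "b \<le> n" using block_le_n[OF j] unfolding a_def b_def by auto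
  define w where "w q = g (c (if q < b then q else a))" for q
  have "prodr G (\<lambda>q. Psi j q (x (c q))) a b = Psi j a (w a) \<otimes> prodr G (\<lambda>q. Psi j q (y (c q))) a b \<otimes> inv (Psi j b (w b))"
  proof (rule telescope[where x="\<lambda>q. x (c q)" and y = "\<lambda>q. y (c q)" and w = w and \<Psi> = "Psi j" and f="\<lambda>q. \<phi> (c q)"])
    show "a \<le> b" using ab by simp
    show "x (c q) \<in> carrier G" if "a \<le> q" "q < b" for q using that ab inGP[OF x] c_lt by auto
    show "y (c q) \<in> carrier G" if "a \<le> q" "q < b" for q using that ab inGP[OF y] c_lt by auto
    show "w q \<in> carrier G" if "a \<le> q" "q \<le> b" for q using that ab inGP[OF g] c_lt unfolding w_def by auto
    show "Psi j q \<in> hom G G" if "a \<le> q" "q \<le> b" for q using that ab Psi_hom by auto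
    show "\<phi> (c q) \<in> hom G G" if "a \<le> q" "q < b" for q using that ab phic_hom by auto
    show "Psi j (Suc q) = Psi j q \<circ> \<phi> (c q)" if "a \<le> q" "q < b" for q using that Psi_Suc unfolding a_def by auto
    show "x (c q) = w q \<otimes> y (c q) \<otimes> inv (\<phi> (c q) (w (Suc q)))" if "a \<le> q" "q < b" for q
    proof -
      have "\<sigma> (c q) = c (if Suc q < b then Suc q else a)"
        using cycles[OF j, of q] that unfolding a_def b_def by auto
      then show ?thesis using eqs c_lt[of q] that ab unfolding w_def by auto
    qed
  qed
  then show ?thesis using ab unfolding a_def b_def w_def Psi_start Psi_end by simp
qed

end



context group begin
lemma prodr_single:
  assumes "a < b" "f a \<in> carrier G" "\<And>q. a < q \<Longrightarrow> q < b \<Longrightarrow> f q = \<one>"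
  shows "prodr G f a b = f a"
  using assms
proof (induction b)
  case 0 then show ?case by simp
next
  case (Suc b)
  show ?case
  proof (cases "a < b")
    case True
    then show ?thesis using Suc by simp
  next
    case False
    then have "a = b" using Suc by auto
    then show ?thesis using Suc by (simp add: prodr_empty)
  qed
qed
end

context twsetting begin

lemma F_closed: "x \<in> carrier GP \<Longrightarrow> j \<in> {1..k} \<Longrightarrow> F x j \<in> carrier G"
proof -
  assume x: "x \<in> carrier GP" and j: "j \<in> {1..k}"
  have "prodr G (\<lambda>q. Psi j q (x (c q))) (m (j - 1)) (m j) \<in> carrier G"
  proof (rule prodr_closed)
    fix q assume "m (j - 1) \<le> q" "q < m j"
    then have q: "q < n" using block_le_n[OF j] by auto
    show "Psi j q (x (c q)) \<in> carrier G"
      using q by (intro hom_closed'[OF Psi_hom] inGP[OF x] c_lt) auto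
  qed
  then show ?thesis using j by (simp add: F_def)
qed

lemma F_map: "x \<in> carrier GP \<Longrightarrow> F x \<in> PiE {1..k} (\<lambda>_. carrier G)"
  using F_closed by (auto simp: F_def PiE_iff)

lemma blk_of: "j \<in> {1..k} \<Longrightarrow> m (j - 1) \<le> q \<Longrightarrow> q < m j \<Longrightarrow> blk (pos (c q)) = j \<and> pos (c q) = q"
  using block_le_n[of j] pos_c[of q] blk_eq[of j q] by auto

lemma F_surj: "PiE {1..k} (\<lambda>_. carrier G) \<subseteq> F ` carrier GP"
proof
  fix z assume z: "z \<in> PiE {1..k} (\<lambda>_. carrier G)"
  define x where "x = (\<lambda>i\<in>{0..<n}. if pos i = m (blk (pos i) - 1) then z (blk (pos i)) else \<one>)"
  have xc: "x \<in> carrier GP"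
    unfolding x_def carrier_GP using z pos_lt blk_prop by (auto simp: PiE_iff)
  have "F x = z"
  proof
    fix j
    show "F x j = z j"
    proof (cases "j \<in> {1..k}")
      case False
      have "z j = undefined" using z False by (meson PiE_arb)
      then show ?thesis using False unfolding F_def by auto
    next
      case j: True
      have ab: "m (j - 1) < m j" "m j \<le> n" using block_le_n[OF j] by auto
      have xq: "x (c q) = (if q = m (j - 1) then z j else \<one>)" if "m (j - 1) \<le> q" "q < m j" for q
        using blk_of[OF j that] c_lt[of q] that ab unfolding x_def by auto
      have "prodr G (\<lambda>q. Psi j q (x (c q))) (m (j - 1)) (m j) = Psi j (m (j - 1)) (x (c (m (j - 1))))"
      proof (rule prodr_single)
        show "m (j - 1) < m j" by (fact ab(1))
        show "Psi j (m (j - 1)) (x (c (m (j - 1)))) \<in> carrier G"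
          using xq[of "m (j - 1)"] ab z j unfolding Psi_start by (auto simp: PiE_iff)
        show "Psi j q (x (c q)) = \<one>" if "m (j - 1) < q" "q < m j" for q
          using xq[of q] that hom_one'[OF Psi_hom[of q j]] ab by auto
      qed
      also have "\<dots> = z j" using xq[of "m (j - 1)"] ab unfolding Psi_start by simp
      finally show ?thesis using j by (simp add: F_def)
    qed
  qed
  then show "z \<in> F ` carrier GP" using xc by auto
qed

lemma bw_closed: "t \<le> n \<Longrightarrow> h \<in> carrier G \<Longrightarrow> x \<in> carrier GP \<Longrightarrow> y \<in> carrier GP \<Longrightarrow>
    bw G \<phi> c x y t h d \<in> carrier G"
proof (induction d)
  case 0 then show ?case by simp
next
  case (Suc d)
  have lt: "c (t - Suc d) < n" using Suc n by (intro c_lt) auto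
  then show ?case using Suc inGP hom_closed'[OF endo[OF lt]] by auto
qed

end



context twsetting begin

lemma bwd:
  assumes x: "x \<in> carrier GP" and y: "y \<in> carrier GP"
    and rel: "\<forall>j\<in>{1..k}. (F x j, F y j) \<in> twisted_conj G (psi j)"
  shows "(x, y) \<in> twisted_conj GP Phi"
proof -
  have "\<forall>j\<in>{1..k}. \<exists>h. h \<in> carrier G \<and> F x j = h \<otimes> F y j \<otimes> inv (psi j h)"
    using rel by (auto simp: twisted_conj_def)
  then obtain H where H: "\<And>j. j \<in> {1..k} \<Longrightarrow> H j \<in> carrier G \<and> F x j = H j \<otimes> F y j \<otimes> inv (psi j (H j))"
    by metis
  define W where "W j q = bw G \<phi> c x y (m j) (H j) (m j - q)" for j q
  have Wc: "W j q \<in> carrier G" if "j \<in> {1..k}" for j q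
    unfolding W_def using bw_closed block_le_n[OF that] H[OF that] x y by auto
  have Weq: "x (c q) = W j q \<otimes> y (c q) \<otimes> inv (\<phi> (c q) (W j (Suc q)))"
    if j: "j \<in> {1..k}" and q: "m (j - 1) \<le> q" "q < m j" for j q
  proof -
    have qn: "q < n" using q block_le_n[OF j] by auto
    have e1: "m j - q = Suc (m j - Suc q)" and e2: "m j - Suc (m j - Suc q) = q" using q by auto
    have Wq: "W j q = x (c q) \<otimes> \<phi> (c q) (W j (Suc q)) \<otimes> inv (y (c q))"
      unfolding W_def e1 by (simp only: bw.simps e2)
    have P: "\<phi> (c q) (W j (Suc q)) \<in> carrier G" using hom_closed'[OF phic_hom[OF qn] Wc[OF j]] .
    have X: "x (c q) \<in> carrier G" and Y: "y (c q) \<in> carrier G" using inGP x y c_lt qn by auto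
    show ?thesis unfolding Wq using P X Y by (simp add: m_assoc)
  qed
  have closure: "W j (m (j - 1)) = H j" if j: "j \<in> {1..k}" for j
  proof -
    define a where "a = m (j - 1)"
    define b where "b = m j"
    have ab: "a < b" "b \<le> n" using block_le_n[OF j] unfolding a_def b_def by auto
    have "prodr G (\<lambda>q. Psi j q (x (c q))) a b = Psi j a (W j a) \<otimes> prodr G (\<lambda>q. Psi j q (y (c q))) a b \<otimes> inv (Psi j b (W j b))"
    proof (rule telescope[where x="\<lambda>q. x (c q)" and y = "\<lambda>q. y (c q)" and w = "W j" and \<Psi> = "Psi j" and f="\<lambda>q. \<phi> (c q)"])
      show "a \<le> b" using ab by simp
      show "x (c q) \<in> carrier G" if "a \<le> q" "q < b" for q using that ab inGP[OF x] c_lt by auto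
      show "y (c q) \<in> carrier G" if "a \<le> q" "q < b" for q using that ab inGP[OF y] c_lt by auto
      show "W j q \<in> carrier G" if "a \<le> q" "q \<le> b" for q using Wc[OF j] .
      show "Psi j q \<in> hom G G" if "a \<le> q" "q \<le> b" for q using that ab Psi_hom by auto
      show "\<phi> (c q) \<in> hom G G" if "a \<le> q" "q < b" for q using that ab phic_hom by auto
      show "Psi j (Suc q) = Psi j q \<circ> \<phi> (c q)" if "a \<le> q" "q < b" for q using that Psi_Suc unfolding a_def by auto
      show "x (c q) = W j q \<otimes> y (c q) \<otimes> inv (\<phi> (c q) (W j (Suc q)))" if "a \<le> q" "q < b" for q
        using Weq[OF j] that unfolding a_def b_def by auto
    qed
    moreover have "W j b = H j" unfolding W_def b_def by simp
    ultimately have "F x j = W j a \<otimes> F y j \<otimes> inv (psi j (H j))"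
      using j unfolding a_def b_def F_def Psi_start Psi_end by simp
    then have "W j a \<otimes> F y j \<otimes> inv (psi j (H j)) = H j \<otimes> F y j \<otimes> inv (psi j (H j))"
      using H[OF j] by simp
    moreover have "F y j \<in> carrier G" using F_closed[OF y j] .
    moreover have "inv (psi j (H j)) \<in> carrier G" using hom_closed'[OF psi_hom[OF j]] H[OF j] by auto
    ultimately show ?thesis using Wc[OF j] H[OF j] unfolding a_def by simp
  qed
  define g where "g = (\<lambda>i\<in>{0..<n}. W (blk (pos i)) (pos i))"
  have gc: "g \<in> carrier GP"
    unfolding g_def carrier_GP using Wc blk_prop pos_lt by (auto simp: PiE_iff)
  have gq: "g (c q) = W j q" if j: "j \<in> {1..k}" and q: "m (j - 1) \<le> q" "q < m j" for j q
    using blk_of[OF j q] c_lt[of q] block_le_n[OF j] q unfolding g_def by auto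
  have "\<forall>i<n. x i = g i \<otimes> y i \<otimes> inv (\<phi> i (g (\<sigma> i)))"
  proof (intro allI impI)
    fix i assume i: "i < n"
    define q where "q = pos i"
    define j where "j = blk q"
    have qn: "q < n" unfolding q_def using pos_lt[OF i] .
    have jp: "j \<in> {1..k}" "m (j - 1) \<le> q" "q < m j" using blk_prop[OF qn] unfolding j_def by auto
    have ic: "i = c q" unfolding q_def using c_pos[OF i] by simp
    have sg: "g (\<sigma> i) = W j (Suc q)"
    proof (cases "Suc q < m j")
      case True
      then have "\<sigma> i = c (Suc q)" using cycles[OF jp] ic by simp
      then show ?thesis using gq[OF jp(1), of "Suc q"] jp True by auto
    next
      case False
      then have "\<sigma> i = c (m (j - 1))" using cycles[OF jp] ic by simp
      moreover have "g (c (m (j - 1))) = W j (m (j - 1))" using gq[OF jp(1), of "m (j - 1)"] block_le_n[OF jp(1)] by auto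
      moreover have "Suc q = m j" using False jp by auto
      ultimately show ?thesis using closure[OF jp(1)] by (simp add: W_def)
    qed
    show "x i = g i \<otimes> y i \<otimes> inv (\<phi> i (g (\<sigma> i)))"
      unfolding sg using Weq[OF jp] gq[OF jp] ic by simp
  qed
  then show ?thesis using tc_iff x y gc by auto
qed

lemma main: "reidemeister GP Phi = (\<Prod>j\<in>{1..k}. reidemeister G (psi j))"
  unfolding reidemeister_def
proof (rule quotient_count[where F = F and B = "\<lambda>_. carrier G"])
  show "twisted_conj GP Phi \<subseteq> carrier GP \<times> carrier GP" by (auto simp: twisted_conj_def)
  show "\<And>x. x \<in> carrier GP \<Longrightarrow> F x \<in> PiE {1..k} (\<lambda>_. carrier G)" by (rule F_map)
  show "PiE {1..k} (\<lambda>_. carrier G) \<subseteq> F ` carrier GP" by (rule F_surj)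
  show "equiv (carrier G) (twisted_conj G (psi j))" if "j \<in> {1..k}" for j
    using twisted_equiv[OF psi_hom[OF that]] .
  show "finite {1..k}" by simp
  show "carrier G \<noteq> {}" by auto
  fix x y assume x: "x \<in> carrier GP" and y: "y \<in> carrier GP"
  show "(x, y) \<in> twisted_conj GP Phi \<longleftrightarrow> (\<forall>j\<in>{1..k}. (F x j, F y j) \<in> twisted_conj G (psi j))"
  proof
    assume "(x, y) \<in> twisted_conj GP Phi"
    then obtain g where g: "g \<in> carrier GP" and eqs: "\<forall>i<n. x i = g i \<otimes> y i \<otimes> inv (\<phi> i (g (\<sigma> i)))"
      using tc_iff by auto
    show "\<forall>j\<in>{1..k}. (F x j, F y j) \<in> twisted_conj G (psi j)"
    proof
      fix j assume j: "j \<in> {1..k}"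
      have "F x j = g (c (m (j - 1))) \<otimes> F y j \<otimes> inv (psi j (g (c (m (j - 1)))))"
        using fwd[OF x y g eqs j] j by (simp add: F_def)
      moreover have "g (c (m (j - 1))) \<in> carrier G"
        using inGP[OF g] c_lt block_le_n[OF j] by auto
      ultimately show "(F x j, F y j) \<in> twisted_conj G (psi j)"
        using F_closed[OF x j] F_closed[OF y j] unfolding twisted_conj_def by blast
    qed
  next
    assume "\<forall>j\<in>{1..k}. (F x j, F y j) \<in> twisted_conj G (psi j)"
    then show "(x, y) \<in> twisted_conj GP Phi" using bwd x y by blast
  qed
qed

end

theorem mainTheorem5:
  fixes G :: "('a, 'b) monoid_scheme"
    and n k :: nat
    and \<phi> :: "nat \<Rightarrow> 'a \<Rightarrow> 'a"
    and \<sigma> c m :: "nat \<Rightarrow> nat"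
  assumes grp: "group G"
    and n: "n \<ge> 1"
    and endo: "\<And>i. i < n \<Longrightarrow> \<phi> i \<in> hom G G"
    and perm: "\<sigma> permutes {0..<n}"
    and c_bij: "bij_betw c {0..<n} {0..<n}"
    and m0: "m 0 = 0"
    and m_mono: "\<And>j. j < k \<Longrightarrow> m j < m (Suc j)"
    and mk: "m k = n"
    and cycles: "\<And>j p. j \<in> {1..k} \<Longrightarrow> m (j - 1) \<le> p \<Longrightarrow> p < m j \<Longrightarrow>
                   \<sigma> (c p) = (if Suc p < m j then c (Suc p) else c (m (j - 1)))"
  shows "reidemeister (product_group {0..<n} (\<lambda>_. G)) (twisted_perm_endo n \<phi> \<sigma>)
         = (\<Prod>j\<in>{1..k}. reidemeister G (block_comp \<phi> c (m (j - 1)) (m j)))"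
proof -
  interpret r: twsetting G n k \<phi> \<sigma> c m
    using assms by (simp add: twsetting_def twsetting_axioms_def)
  show ?thesis using r.main unfolding r.GP_def r.Phi_def r.psi_def .
qed

end
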